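(* Let $d_1,\dots,d_n$ be positive integers and let $b,a_1,\dots,a_n\in\mathbb{F}_q^*$. Let $$N^*=\#\{(x_1,\dots,x_n)\in(\mathbb{F}_q^* )^n : a_1x_1^{d_1}+\cdots+a_nx_n^{d_n}=b\}.$$ Then $$\left|N^*-\frac1q\big[(q-1)^n-(-1)^n\big]\right|\le\sum_{e=0}^{n-1}\ \sum_{1\le i_{e+1}<i_{e+2}<\cdots<i_n\le n}\ \prod_{j=e+1}^n(d_{i_j}-1)\,\sqrt q^{\,n-e-1}.$$ *)

theory Defs
  imports Complex_Main "HOL-Library.FuncSet" "HOL-Library.Cardinality"
begin

definition Nstar :: "nat \<Rightarrow> (nat \<Rightarrow> nat) \<Rightarrow> (nat \<Rightarrow> 'a::{field,finite}) \<Rightarrow> 'a \<Rightarrow> nat" where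
  "Nstar n d a b = card {x \<in> {1..n} \<rightarrow>\<^sub>E (UNIV - {0}). (\<Sum>i=1..n. a i * x i ^ d i) = b}"

end

theory Submission
  imports Defs "HOL-Algebra.Multiplicative_Group"
begin

definition tring :: "'a::field ring" where
 "tring = \<lparr> carrier = UNIV, monoid.mult = (\<lambda>x y. x * y), one = 1, ring.zero = 0, add = (\<lambda> x y. x + y) \<rparr>"

lemma tring_field: "field (tring :: 'a::field ring)"
proof -
  have "\<exists>y. x + y = 0" for x :: 'a
    using add.right_inverse by blast
  moreover have "x \<noteq> 0 \<Longrightarrow> \<exists>y. x * y = 1" for x :: 'a
    by (rule exI[of _ "inverse x"]) auto
  ultimately show ?thesis
    unfolding tring_def using add.right_inverse
    by unfold_locales (auto simp:algebra_simps Units_def)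
qed

lemma tring_pow: "x [^]\<^bsub>(tring::'a::field ring)\<^esub> (n::nat) = x ^ n"
  by (induct n) (simp_all add: tring_def)

lemma gen_exists: "\<exists>g::'a::{field,finite}. UNIV - {0} = {g ^ i | i. i \<in> (UNIV::nat set)}"
proof -
  interpret F: field "tring :: 'a ring" by (rule tring_field)
  have "finite (carrier (tring :: 'a ring))" by simp
  from F.finite_field_mult_group_has_gen[OF this] obtain g where
    g: "carrier (mult_of (tring::'a ring)) = {g[^]\<^bsub>tring\<^esub> i | i::nat . i \<in> UNIV}" by blast
  have "carrier (mult_of (tring::'a ring)) = UNIV - {0}" by (simp add: tring_def)
  with g show ?thesis by (auto simp: tring_pow)
qed

lemma fpow_card: "(x::'a::{field,finite}) ^ CARD('a) = x"
proof (cases "x = 0")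
  case False
  have "x * (\<Prod>y\<in>UNIV-{0}. x * y) = x * x ^ (card (UNIV :: 'a set) - 1) * \<Prod>(UNIV-{0})"
    by (simp add: prod.distrib mult_ac)
  also have "x * x ^ (card (UNIV :: 'a set) - 1) = x ^ Suc (card (UNIV :: 'a set) - 1)"
    by (subst power_Suc) auto
  also have "Suc (card (UNIV :: 'a set) - 1) = card (UNIV :: 'a set)"
    using finite_UNIV_card_ge_0[where ?'a = 'a] by simp
  also have "(\<Prod>y\<in>UNIV-{0}. x * y) = (\<Prod>y\<in>UNIV-{0}. y)"
    by (rule prod.reindex_bij_witness[of _ "\<lambda>y. y / x" "\<lambda>y. x * y"]) (use False in auto)
  finally show ?thesis
    by simp
qed (use finite_UNIV_card_ge_0[where ?'a = 'a] in auto)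

lemma fpow_card1: "(x::'a::{field,finite}) \<noteq> 0 \<Longrightarrow> x ^ (CARD('a) - 1) = 1"
proof -
  assume x: "x \<noteq> 0"
  have "Suc (CARD('a) - 1) = CARD('a)" using finite_UNIV_card_ge_0[where ?'a = 'a] by simp
  hence "x * x ^ (CARD('a) - 1) = x ^ CARD('a)" by (metis power_Suc)
  hence "x * x ^ (CARD('a) - 1) = x * 1" using fpow_card[of x] by simp
  thus ?thesis using x by simp
qed

lemma nat_inv: "(of_nat m :: 'a::{field,finite}) \<noteq> 0 \<Longrightarrow> \<exists>m'. of_nat m' * (of_nat m :: 'a) = 1"
proof -
  assume h: "(of_nat m :: 'a) \<noteq> 0"
  have "(of_nat m :: 'a) ^ (CARD('a) - 1) = 1" using fpow_card1[OF h] .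
  moreover have "CARD('a) - 1 = Suc (CARD('a) - 2)"
  proof -
    have "card {0::'a, 1} \<le> CARD('a)" by (rule card_mono) auto
    thus ?thesis by simp
  qed
  ultimately have "of_nat (m ^ (CARD('a) - 2)) * (of_nat m :: 'a) = 1"
    by (simp add: mult.commute)
  thus ?thesis by blast
qed

definition sgp :: "'a::field set \<Rightarrow> bool" where
  "sgp H \<longleftrightarrow> 0 \<in> H \<and> (\<forall>x\<in>H. \<forall>y\<in>H. x + y \<in> H)"

lemma sgp_nat: "sgp H \<Longrightarrow> x \<in> H \<Longrightarrow> of_nat m * x \<in> H"
  by (induct m) (auto simp: sgp_def algebra_simps)

lemma CHARpos: "CHAR('a::{field,finite}) > 0"
  by (rule finite_imp_CHAR_pos) simp

lemma minus_one_nat: "(-1 :: 'a::{field,finite}) = of_nat (CHAR('a) - 1)"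
proof -
  have "of_nat (CHAR('a) - 1) + 1 = (of_nat CHAR('a) :: 'a)"
    using CHARpos[where 'a='a] by (metis Suc_diff_1 add.commute of_nat_Suc)
  hence "of_nat (CHAR('a) - 1) + 1 = (0::'a)" by simp
  hence "(of_nat (CHAR('a) - 1) + 1) - 1 = (0::'a) - 1" by simp
  thus ?thesis by simp
qed

lemma sgp_neg: "sgp H \<Longrightarrow> (x::'a::{field,finite}) \<in> H \<Longrightarrow> -x \<in> H"
proof -
  assume a: "sgp H" "x \<in> H"
  have "-x = (-1) * x" by simp
  also have "\<dots> = of_nat (CHAR('a) - 1) * x" using minus_one_nat[where 'a='a] by simp
  finally show ?thesis using sgp_nat[OF a, of "CHAR('a) - 1"] by simp
qed

lemma sgp_diff: "sgp H \<Longrightarrow> (x::'a::{field,finite}) \<in> H \<Longrightarrow> y \<in> H \<Longrightarrow> x - y \<in> H"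
  using sgp_neg[of H y] unfolding sgp_def by (metis diff_conv_add_uminus)

lemma zeta_eq:
  fixes a b :: nat
  assumes "(of_nat a :: 'a::{field,finite}) = of_nat b"
  shows "cis (2 * pi / CHAR('a)) ^ a = cis (2 * pi / CHAR('a)) ^ b"
proof -
  let ?z = "cis (2 * pi / CHAR('a))"
  have zp: "?z ^ CHAR('a) = 1" using CHARpos[where 'a='a] by (simp add: DeMoivre)
  have *: "?z ^ a = ?z ^ b" if "(of_nat a :: 'a) = of_nat b" "a \<le> b" for a b
  proof -
    obtain k where b: "b = a + k" using \<open>a \<le> b\<close> le_Suc_ex by blast
    have "(of_nat k :: 'a) = 0" using that(1) b by simp
    then obtain j where "k = CHAR('a) * j" using of_nat_eq_0_iff_char_dvd by blast
    hence "?z ^ k = 1" using zp by (simp add: power_mult)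
    thus ?thesis using b by (simp add: power_add)
  qed
  show ?thesis
  proof (cases "a \<le> b")
    case True thus ?thesis using * assms by blast
  next
    case False thus ?thesis using *[of b a] assms by simp
  qed
qed

lemma add_char_exists:
  "\<exists>\<psi>::'a::{field,finite} \<Rightarrow> complex. (\<forall>x y. \<psi> (x + y) = \<psi> x * \<psi> y) \<and> (\<forall>x. norm (\<psi> x) = 1) \<and> (\<exists>x. \<psi> x \<noteq> 1)"
proof -
  define Fam where "Fam = {H :: 'a set. sgp H \<and> 1 \<notin> H}"
  have "finite Fam" by simp
  moreover have "{0} \<in> Fam" by (simp add: Fam_def sgp_def)
  ultimately obtain H where H: "H \<in> Fam" and Hmax: "\<And>H'. H' \<in> Fam \<Longrightarrow> H \<subseteq> H' \<Longrightarrow> H = H'"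
    using finite_has_maximal[of Fam] by blast
  have sH: "sgp H" and oH: "1 \<notin> H" using H by (auto simp: Fam_def)
  have cover: "\<exists>m. x - of_nat m \<in> H" for x
  proof (cases "x \<in> H")
    case True thus ?thesis by (intro exI[of _ 0]) simp
  next
    case False
    define H' where "H' = {h + of_nat m * x | h m. h \<in> H}"
    have "sgp H'" unfolding sgp_def H'_def
    proof safe
      show "\<exists>h m. 0 = h + of_nat m * x \<and> h \<in> H"
        using sH by (intro exI[of _ 0] exI[of _ 0]) (simp add: sgp_def)
      fix h1 m1 h2 m2 assume "h1 \<in> H" "h2 \<in> H"
      thus "\<exists>h m. h1 + of_nat m1 * x + (h2 + of_nat m2 * x) = h + of_nat m * x \<and> h \<in> H"
        using sH by (intro exI[of _ "h1 + h2"] exI[of _ "m1 + m2"]) (auto simp: sgp_def algebra_simps)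
    qed
    moreover have "H \<subseteq> H'" unfolding H'_def by (force intro: exI[of _ 0])
    moreover have "x \<in> H'" unfolding H'_def using sH
      by (intro CollectI exI[of _ 0] exI[of _ 1]) (simp add: sgp_def)
    ultimately have "H' \<notin> Fam" using Hmax False by blast
    with \<open>sgp H'\<close> have "1 \<in> H'" by (simp add: Fam_def)
    then obtain h m where hm: "1 = h + of_nat m * x" "h \<in> H" unfolding H'_def by blast
    have "(of_nat m :: 'a) \<noteq> 0" using hm oH by auto
    then obtain m' where m': "of_nat m' * (of_nat m :: 'a) = 1" using nat_inv by blast
    have "of_nat m' = of_nat m' * h + x" using hm m'
      by (metis distrib_left mult.assoc mult.left_neutral mult.right_neutral)
    hence "x - of_nat m' = - (of_nat m' * h)" by (simp add: algebra_simps)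
    moreover have "- (of_nat m' * h) \<in> H" using sgp_neg[OF sH sgp_nat[OF sH hm(2)]] .
    ultimately have "x - of_nat m' \<in> H" by simp
    thus ?thesis by blast
  qed
  have uniq: "(of_nat m1 :: 'a) = of_nat m2" if "x - of_nat m1 \<in> H" "x - of_nat m2 \<in> H" for x m1 m2
  proof (rule ccontr)
    assume ne: "(of_nat m1 :: 'a) \<noteq> of_nat m2"
    have "(x - of_nat m2) - (x - of_nat m1) \<in> H" using sgp_diff[OF sH that(2) that(1)] .
    hence c: "(of_nat m1 :: 'a) - of_nat m2 \<in> H" by simp
    have "(of_nat m1 :: 'a) - of_nat m2 = of_nat m1 + of_nat (CHAR('a) - 1) * of_nat m2"
    proof -
      have "(of_nat m1 :: 'a) - of_nat m2 = of_nat m1 + (-1) * of_nat m2" by simp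
      also note minus_one_nat[where 'a='a]
      finally show ?thesis .
    qed
    also have "\<dots> = of_nat (m1 + (CHAR('a) - 1) * m2)" by simp
    finally have ceq: "(of_nat m1 :: 'a) - of_nat m2 = of_nat (m1 + (CHAR('a) - 1) * m2)" .
    have "(of_nat (m1 + (CHAR('a) - 1) * m2) :: 'a) \<noteq> 0" using ne ceq by (metis eq_iff_diff_eq_0)
    then obtain k where k: "of_nat k * (of_nat (m1 + (CHAR('a) - 1) * m2) :: 'a) = 1" using nat_inv by blast
    have "of_nat k * (of_nat (m1 + (CHAR('a) - 1) * m2) :: 'a) \<in> H"
      using sgp_nat[OF sH, of _ k] c ceq by simp
    with k oH show False by simp
  qed
  define f where "f x = (SOME m. x - of_nat m \<in> H)" for x
  have f: "x - of_nat (f x) \<in> H" for x unfolding f_def using cover[of x] by (rule someI_ex)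
  define z where "z = cis (2 * pi / CHAR('a))"
  define \<psi> where "\<psi> x = z ^ f x" for x
  have "\<psi> (x + y) = \<psi> x * \<psi> y" for x y
  proof -
    have "(x + y) - of_nat (f x + f y) = (x - of_nat (f x)) + (y - of_nat (f y))" by simp
    also have "\<dots> \<in> H" using sH f[of x] f[of y] by (simp add: sgp_def)
    finally have "(of_nat (f (x+y)) :: 'a) = of_nat (f x + f y)" using uniq f[of "x+y"] by blast
    hence "z ^ f (x+y) = z ^ (f x + f y)" unfolding z_def by (rule zeta_eq)
    thus ?thesis by (simp add: \<psi>_def power_add)
  qed
  moreover have "norm (\<psi> x) = 1" for x by (simp add: \<psi>_def z_def norm_power)
  moreover have "\<psi> 1 \<noteq> 1"
  proof -
    have "(of_nat (f 1) :: 'a) = of_nat 1" using uniq[of 1 "f 1" 1] f[of 1] sH by (simp add: sgp_def)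
    hence "\<psi> 1 = z" unfolding \<psi>_def z_def using zeta_eq[of "f 1" 1] by simp
    moreover have "z \<noteq> 1"
    proof
      assume "z = 1"
      have p2: "CHAR('a) > 1" using CHARpos[where 'a='a] CHAR_not_1[where 'a='a] by linarith
      have inj: "inj_on (\<lambda>k. cis (2 * pi * real k / real CHAR('a))) {..<CHAR('a)}"
        using bij_betw_roots_unity[of "CHAR('a)"] CHARpos[where 'a='a] by (simp add: bij_betw_def)
      have "cis (2 * pi * real 1 / real CHAR('a)) = cis (2 * pi * real 0 / real CHAR('a))"
        using \<open>z = 1\<close> by (simp add: z_def)
      from inj_onD[OF inj this] p2 show False by simp
    qed
    ultimately show ?thesis by simp
  qed
  ultimately show ?thesis by blast
qed

lemma card_ge2: "CARD('a::{field,finite}) \<ge> 2"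
proof -
  have "card {0::'a, 1} \<le> CARD('a)" by (rule card_mono) auto
  thus ?thesis by simp
qed

lemma card_U: "card (UNIV - {0::'a::{field,finite}}) = CARD('a) - 1"
  by (simp add: card_Diff_singleton)

lemma orth_mult:
  fixes lam :: "'a::{field,finite} \<Rightarrow> complex"
  assumes m: "\<And>x y. x \<noteq> 0 \<Longrightarrow> y \<noteq> 0 \<Longrightarrow> lam (x*y) = lam x * lam y"
    and s0: "s0 \<noteq> 0" "lam s0 \<noteq> 1"
  shows "(\<Sum>s\<in>UNIV-{0}. lam s) = 0"
proof -
  have "(\<Sum>s\<in>UNIV-{0}. lam s) = (\<Sum>s\<in>UNIV-{0}. lam (s0 * s))"
    by (rule sum.reindex_bij_witness[of _ "\<lambda>y. s0 * y" "\<lambda>y. y / s0"]) (use s0 in auto)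
  also have "\<dots> = lam s0 * (\<Sum>s\<in>UNIV-{0}. lam s)"
    by (simp add: sum_distrib_left m s0)
  finally have "(1 - lam s0) * (\<Sum>s\<in>UNIV-{0}. lam s) = 0" by (simp add: algebra_simps)
  thus ?thesis using s0 by simp
qed

lemma omega_mod:
  assumes "Q > 0"
  shows "cis (2 * pi / Q) ^ a = cis (2 * pi / Q) ^ (a mod Q)"
proof -
  have "cis (2 * pi / Q) ^ Q = 1" using assms by (simp add: DeMoivre)
  hence "cis (2 * pi / Q) ^ (Q * (a div Q)) = 1" by (simp add: power_mult)
  moreover have "a = Q * (a div Q) + a mod Q" by simp
  ultimately show ?thesis by (metis mult_1 power_add)
qed

lemma omega_pow: "cis (2 * pi / Q) ^ k = cis (2 * pi * real k / real Q)"
proof -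
  have "cis (2 * pi / Q) ^ k = cis (real k * (2 * pi / Q))" by (rule DeMoivre)
  also have "real k * (2 * pi / Q) = 2 * pi * real k / real Q" by simp
  finally show ?thesis .
qed

lemma mult_chars_exist:
 "\<exists>\<chi> :: nat \<Rightarrow> 'a::{field,finite} \<Rightarrow> complex.
   (\<forall>k x y. x \<noteq> 0 \<longrightarrow> y \<noteq> 0 \<longrightarrow> \<chi> k (x*y) = \<chi> k x * \<chi> k y) \<and>
   (\<forall>k x. norm (\<chi> k x) = 1) \<and>
   (\<forall>x. \<chi> 0 x = 1) \<and>
   (\<forall>d y. d > 0 \<longrightarrow> y \<noteq> 0 \<longrightarrow> of_nat (card {x. x \<noteq> 0 \<and> x^d = y}) =
       (\<Sum>k\<in>{k. k < CARD('a) - 1 \<and> (\<forall>x. x\<noteq>0 \<longrightarrow> \<chi> k x ^ d = 1)}. cnj (\<chi> k y))) \<and>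
   (\<forall>d. d > 0 \<longrightarrow> card {k. k < CARD('a) - 1 \<and> (\<forall>x. x\<noteq>0 \<longrightarrow> \<chi> k x ^ d = 1)} \<le> d)"
proof -
  define Q where "Q = CARD('a) - 1"
  have Q0: "Q > 0" using card_ge2[where 'a='a] by (simp add: Q_def)
  obtain g :: 'a where g: "UNIV - {0} = {g ^ i | i. i \<in> (UNIV::nat set)}" using gen_exists by blast
  have g0: "g \<noteq> 0" using g by (metis (mono_tags, lifting) CollectD DiffE Diff_empty UNIV_I insertI1 mem_Collect_eq power_0 zero_neq_one power_0_left)
  have gQ: "g ^ Q = 1" using fpow_card1[OF g0] by (simp add: Q_def)
  have gmod: "g ^ i = g ^ (i mod Q)" for i
  proof -
    have "i = Q * (i div Q) + i mod Q" by simp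
    hence "g ^ i = g ^ (Q * (i div Q) + i mod Q)" by (rule arg_cong)
    also have "\<dots> = g ^ (i mod Q)" by (subst power_add, subst power_mult) (simp add: gQ)
    finally show ?thesis .
  qed
  have img: "(\<lambda>i. g ^ i) ` {..<Q} = UNIV - {0}"
  proof
    show "(\<lambda>i. g ^ i) ` {..<Q} \<subseteq> UNIV - {0}" using g0 by auto
    show "UNIV - {0} \<subseteq> (\<lambda>i. g ^ i) ` {..<Q}"
    proof
      fix x assume "x \<in> UNIV - {0::'a}"
      then obtain i where "x = g ^ i" using g by blast
      hence "x = g ^ (i mod Q)" using gmod by simp
      moreover have "i mod Q \<in> {..<Q}" using Q0 by simp
      ultimately show "x \<in> (\<lambda>i. g ^ i) ` {..<Q}" by blast
    qed
  qed
  have inj: "inj_on (\<lambda>i. g ^ i) {..<Q}"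
    by (rule eq_card_imp_inj_on) (simp_all add: img card_U, simp add: Q_def)
  define L where "L x = inv_into {..<Q} (\<lambda>i. g ^ i) x" for x
  have L1: "L x < Q" "g ^ L x = x" if "x \<noteq> 0" for x
  proof -
    have m: "x \<in> (\<lambda>i. g ^ i) ` {..<Q}" using img that by auto
    show "L x < Q" using inv_into_into[OF m] by (simp add: L_def)
    show "g ^ L x = x" using f_inv_into_f[OF m] by (simp add: L_def)
  qed
  have L2: "L (g ^ i) = i" if "i < Q" for i
    unfolding L_def using inj that by (simp add: inv_into_f_f)
  have Lmul: "L (x * y) = (L x + L y) mod Q" if "x \<noteq> 0" "y \<noteq> 0" for x y
  proof -
    have "x * y = g ^ (L x + L y)" using L1 that by (simp add: power_add)
    also have "\<dots> = g ^ ((L x + L y) mod Q)" by (rule gmod)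
    finally show ?thesis using L2 Q0 by simp
  qed
  define w where "w = cis (2 * pi / Q)"
  define \<chi> where "\<chi> k x = w ^ (k * L x)" for k x
  have C1: "\<chi> k (x*y) = \<chi> k x * \<chi> k y" if "x \<noteq> 0" "y \<noteq> 0" for k x y
  proof -
    have "\<chi> k (x*y) = w ^ (k * ((L x + L y) mod Q))" by (simp add: \<chi>_def Lmul that)
    also have "\<dots> = w ^ (k * ((L x + L y) mod Q) mod Q)" unfolding w_def by (rule omega_mod[OF Q0])
    also have "k * ((L x + L y) mod Q) mod Q = k * (L x + L y) mod Q" by (simp add: mod_mult_right_eq)
    also have "w ^ \<dots> = w ^ (k * (L x + L y))" unfolding w_def by (rule omega_mod[OF Q0, symmetric])
    finally show ?thesis by (simp add: \<chi>_def algebra_simps power_add)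
  qed
  have C2: "norm (\<chi> k x) = 1" for k x by (simp add: \<chi>_def w_def norm_power)
  have C3: "\<chi> 0 x = 1" for x by (simp add: \<chi>_def)
  have winj: "inj_on (\<lambda>k. w ^ k) {..<Q}"
    using bij_betw_roots_unity[OF Q0] by (simp add: bij_betw_def w_def omega_pow)
  have O2: "(\<Sum>k<Q. \<chi> k z) = (if z = 1 then of_nat Q else 0)" if "z \<noteq> 0" for z
  proof (cases "z = 1")
    case True
    have "L 1 = 0" using L2[of 0] Q0 by simp
    thus ?thesis using True by (simp add: \<chi>_def)
  next
    case False
    define r where "r = w ^ L z"
    have "L z \<noteq> 0" using L1[OF that] False by (metis power_0)
    hence "r \<noteq> 1" using inj_onD[OF winj, of "L z" 0] L1[OF that] Q0 by (auto simp: r_def)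
    moreover have "r ^ Q = 1"
    proof -
      have "r ^ Q = w ^ (L z * Q)" by (simp add: r_def power_mult)
      also have "\<dots> = w ^ (L z * Q mod Q)" unfolding w_def by (rule omega_mod[OF Q0])
      finally show ?thesis by simp
    qed
    moreover have "(\<Sum>k<Q. \<chi> k z) = (\<Sum>k<Q. r ^ k)"
      by (simp add: \<chi>_def r_def flip: power_mult) (simp add: power_mult mult.commute flip: power_mult)
    ultimately show ?thesis using False by (simp add: sum_gp_strict)
  qed
  have chi1: "\<chi> k 1 = 1" for k
  proof -
    have "L 1 = 0" using L2[of 0] Q0 by simp
    thus ?thesis by (simp add: \<chi>_def)
  qed
  have chinv: "\<chi> k (inverse y) = cnj (\<chi> k y)" if "y \<noteq> 0" for k y
  proof -
    have "\<chi> k y * \<chi> k (inverse y) = \<chi> k 1" using C1[of y "inverse y" k] that by simp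
    also have "\<chi> k 1 = 1"
    proof -
      have "L 1 = 0" using L2[of 0] Q0 by simp
      thus ?thesis by (simp add: \<chi>_def)
    qed
    finally have "\<chi> k y * \<chi> k (inverse y) = 1" .
    moreover have "\<chi> k y * cnj (\<chi> k y) = 1" using C2[of k y]
      by (metis complex_norm_square mult.commute of_real_1 power_one)
    ultimately show ?thesis using C2[of k y]
      by (metis mult.commute mult_cancel_left norm_zero zero_neq_one)
  qed
  have chpow: "\<chi> k (x ^ d) = \<chi> k x ^ d" if "x \<noteq> 0" for k x d
  proof (induct d)
    case 0 thus ?case by (simp add: chi1)
  next
    case (Suc d)
    have "\<chi> k (x ^ Suc d) = \<chi> k x * \<chi> k (x ^ d)" using C1[of x "x^d" k] that by simp
    thus ?case using Suc by simp
  qed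
  define K where "K d = {k. k < Q \<and> (\<forall>x. x\<noteq>0 \<longrightarrow> \<chi> k x ^ d = 1)}" for d
  have C4: "of_nat (card {x. x \<noteq> 0 \<and> x^d = y}) = (\<Sum>k\<in>K d. cnj (\<chi> k y))" if "d > 0" "y \<noteq> 0" for d y
  proof -
    have "of_nat (card {x. x \<noteq> 0 \<and> x^d = y}) = (\<Sum>x\<in>UNIV-{0}. of_bool (x^d = y) :: complex)"
    proof -
      have "{x. x \<noteq> 0 \<and> x^d = y} = (UNIV-{0}) \<inter> {x. x^d = y}" by auto
      thus ?thesis by simp
    qed
    also have "\<dots> = (\<Sum>x\<in>UNIV-{0}. (1 / of_nat Q) * (\<Sum>k<Q. \<chi> k x ^ d * cnj (\<chi> k y)))"
    proof (rule sum.cong[OF refl])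
      fix x assume x: "x \<in> UNIV - {0::'a}"
      have "(\<Sum>k<Q. \<chi> k x ^ d * cnj (\<chi> k y)) = (\<Sum>k<Q. \<chi> k (x^d * inverse y))"
        using x that by (simp add: C1 chinv chpow)
      also have "\<dots> = (if x^d * inverse y = 1 then of_nat Q else 0)" using x that by (intro O2) simp
      finally show "of_bool (x^d = y) = (1 / of_nat Q) * (\<Sum>k<Q. \<chi> k x ^ d * cnj (\<chi> k y))"
        using Q0 that by (auto simp: field_simps)
    qed
    also have "\<dots> = (1 / of_nat Q) * (\<Sum>x\<in>UNIV-{0}. \<Sum>k<Q. \<chi> k x ^ d * cnj (\<chi> k y))"
      by (rule sum_distrib_left[symmetric])
    also have "(\<Sum>x\<in>UNIV-{0}. \<Sum>k<Q. \<chi> k x ^ d * cnj (\<chi> k y)) = (\<Sum>k<Q. \<Sum>x\<in>UNIV-{0}. \<chi> k x ^ d * cnj (\<chi> k y))"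
      by (rule sum.swap)
    also have "\<dots> = (\<Sum>k<Q. cnj (\<chi> k y) * (\<Sum>x\<in>UNIV-{0}. \<chi> k x ^ d))"
      by (simp only: sum_distrib_left mult.commute)
    also have "\<dots> = (\<Sum>k<Q. if k \<in> K d then of_nat Q * cnj (\<chi> k y) else 0)"
    proof (rule sum.cong[OF refl])
      fix k assume k: "k \<in> {..<Q}"
      show "cnj (\<chi> k y) * (\<Sum>x\<in>UNIV-{0}. \<chi> k x ^ d) = (if k \<in> K d then of_nat Q * cnj (\<chi> k y) else 0)"
      proof (cases "k \<in> K d")
        case True
        hence "(\<Sum>x\<in>UNIV-{0}. \<chi> k x ^ d) = (\<Sum>x\<in>UNIV-{0::'a}. 1)" by (intro sum.cong) (auto simp: K_def)
        thus ?thesis using True by (simp add: card_U Q_def)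
      next
        case False
        then obtain s0 where s0: "s0 \<noteq> 0" "\<chi> k s0 ^ d \<noteq> 1" using k by (auto simp: K_def)
        have "(\<Sum>x\<in>UNIV-{0}. \<chi> k x ^ d) = 0"
          by (rule orth_mult[of "\<lambda>x. \<chi> k x ^ d", OF _ s0]) (simp add: C1 power_mult_distrib)
        thus ?thesis using False by simp
      qed
    qed
    also have "\<dots> = (\<Sum>k\<in>K d. of_nat Q * cnj (\<chi> k y))"
      by (rule sum.mono_neutral_cong_right) (auto simp: K_def)
    also have "(1 / of_nat Q) * \<dots> = (\<Sum>k\<in>K d. cnj (\<chi> k y))"
      using Q0 by (simp add: sum_distrib_left)
    finally show ?thesis .
  qed
  have C5: "card (K d) \<le> d" if "d > 0" for d
  proof (cases "Q = 1")
    case True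
    hence "K d \<subseteq> {0}" by (auto simp: K_def)
    hence "card (K d) \<le> card {0::nat}" by (intro card_mono) auto
    thus ?thesis using that by simp
  next
    case False
    hence Lg: "L g = 1" using L2[of 1] Q0 by simp
    have sub: "K d \<subseteq> {..<Q}" by (auto simp: K_def)
    have im: "(\<lambda>k. w ^ k) ` K d \<subseteq> {z. z ^ d = 1}"
    proof
      fix z assume "z \<in> (\<lambda>k. w ^ k) ` K d"
      then obtain k where "k \<in> K d" "z = w ^ k" by blast
      hence "\<chi> k g ^ d = 1" using g0 by (auto simp: K_def)
      thus "z \<in> {z. z ^ d = 1}" using \<open>z = w ^ k\<close> Lg by (simp add: \<chi>_def)
    qed
    have fin: "finite {z::complex. z ^ d = 1}" using that by (intro finite_roots_unity) simp
    have "card (K d) \<le> card {z::complex. z ^ d = 1}"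
      by (rule card_inj_on_le[OF inj_on_subset[OF winj sub] im fin])
    also have "\<dots> = d" by (rule card_roots_unity_eq[OF that])
    finally show ?thesis .
  qed
  show ?thesis
    apply (rule exI[of _ \<chi>])
    using C1 C2 C3 C4 C5 by (simp add: K_def Q_def)
qed

locale addc =
  fixes psi :: "'a::{field,finite} \<Rightarrow> complex"
  assumes padd: "psi (x + y) = psi x * psi y"
    and pnorm: "norm (psi x) = 1"
    and pnt: "\<exists>x. psi x \<noteq> 1"
begin

lemma unit_cnj: "norm (z::complex) = 1 \<Longrightarrow> z * cnj z = 1"
  by (subst complex_norm_square[symmetric]) simp

lemma unit_idem: "(z::complex) * z = z \<Longrightarrow> z \<noteq> 0 \<Longrightarrow> z = 1"
  by (metis mult_cancel_right1)

lemma inv_unit: "(z::complex) * w = 1 \<Longrightarrow> norm z = 1 \<Longrightarrow> w = cnj z"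
proof -
  assume h1: "z * w = 1" and n: "norm z = 1"
  have h2: "z * cnj z = 1" using unit_cnj[OF n] .
  have "w = w * (z * cnj z)" by (simp add: h2)
  also have "\<dots> = (z * w) * cnj z" by (simp only: mult_ac)
  also have "\<dots> = cnj z" by (simp add: h1)
  finally show ?thesis .
qed

lemma psi0: "psi 0 = 1"
proof (rule unit_idem)
  show "psi 0 * psi 0 = psi 0" by (metis padd add_0)
  show "psi 0 \<noteq> 0" using pnorm[of 0] by auto
qed

lemma psi_neg: "psi (-x) = cnj (psi x)"
proof (rule inv_unit)
  show "psi x * psi (-x) = 1" using padd[of x "-x"] psi0 by (metis add.right_inverse)
  show "norm (psi x) = 1" by (rule pnorm)
qed

lemma psi_sum: "finite A \<Longrightarrow> psi (\<Sum>i\<in>A. f i) = (\<Prod>i\<in>A. psi (f i))"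
  by (induct A rule: finite_induct) (simp_all add: psi0 padd)

lemma psi_orth: "(\<Sum>x\<in>UNIV. psi (c * x)) = (if c = 0 then of_nat CARD('a) else 0)"
proof (cases "c = 0")
  case True thus ?thesis by (simp add: psi0)
next
  case False
  obtain x0 where x0: "psi x0 \<noteq> 1" using pnt by blast
  have "(\<Sum>x\<in>UNIV. psi (c * x)) = (\<Sum>x\<in>UNIV. psi (c * (x + x0 / c)))"
    by (rule sum.reindex_bij_witness[of _ "\<lambda>y. y + x0 / c" "\<lambda>y. y - x0 / c"]) auto
  also have "\<dots> = (\<Sum>x\<in>UNIV. psi x0 * psi (c * x))"
    using False by (intro sum.cong) (simp_all add: distrib_left padd mult.commute)
  also have "\<dots> = psi x0 * (\<Sum>x\<in>UNIV. psi (c * x))" by (simp add: sum_distrib_left)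
  finally have "(1 - psi x0) * (\<Sum>x\<in>UNIV. psi (c * x)) = 0" by (simp add: algebra_simps)
  thus ?thesis using x0 False by simp
qed


lemma psi_U: "(\<Sum>x\<in>UNIV-{0}. psi (c * x)) = (if c = 0 then of_nat CARD('a) - 1 else -1)"
proof -
  have eq: "(\<Sum>x\<in>UNIV. psi (c * x)) = psi (c * 0) + (\<Sum>x\<in>UNIV-{0}. psi (c * x))"
    by (subst sum.remove[of UNIV 0]) simp_all
  have "(\<Sum>x\<in>UNIV-{0}. psi (c * x)) = (\<Sum>x\<in>UNIV. psi (c * x)) - 1"
    using eq psi0 by simp
  thus ?thesis by (simp add: psi_orth)
qed

lemma gauss:
  fixes lam :: "'a \<Rightarrow> complex"
  assumes m: "\<And>x y. x \<noteq> 0 \<Longrightarrow> y \<noteq> 0 \<Longrightarrow> lam (x*y) = lam x * lam y"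
    and n: "\<And>x. x \<noteq> 0 \<Longrightarrow> norm (lam x) = 1"
    and c: "c \<noteq> 0"
  shows "norm (\<Sum>t\<in>UNIV-{0}. lam t * psi (c * t)) \<le> sqrt (CARD('a))"
proof -
  let ?U = "UNIV - {0::'a}"
  define T where "T = (\<Sum>t\<in>?U. lam t * psi (c * t))"
  have cl: "lam x * cnj (lam x) = 1" if "x \<noteq> 0" for x
    using n[OF that] by (metis complex_norm_square mult.commute of_real_1 power_one)
  have l1: "lam 1 = 1"
  proof -
    have "lam 1 = lam 1 * lam 1" using m[of 1 1] by simp
    moreover have "lam 1 \<noteq> 0" using n[of 1] by auto
    ultimately show ?thesis by (metis mult_cancel_left2)
  qed
  have "T * cnj T = (\<Sum>x\<in>?U. \<Sum>y\<in>?U. lam x * psi (c * x) * cnj (lam y * psi (c * y)))"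
    unfolding T_def by (simp add: sum_product)
  also have "\<dots> = (\<Sum>y\<in>?U. \<Sum>x\<in>?U. lam x * cnj (lam y) * psi (c * (x - y)))"
  proof -
    have e: "lam x * psi (c * x) * cnj (lam y * psi (c * y)) = lam x * cnj (lam y) * psi (c * (x - y))" for x y
    proof -
      have "psi (c * (x - y)) = psi (c * x + - (c * y))" by (simp add: algebra_simps)
      also have "\<dots> = psi (c * x) * cnj (psi (c * y))" by (simp only: padd psi_neg)
      finally show ?thesis by simp
    qed
    show ?thesis by (simp only: e) (rule sum.swap)
  qed
  also have "\<dots> = (\<Sum>y\<in>?U. \<Sum>s\<in>?U. lam s * psi ((c * (s - 1)) * y))"
  proof (rule sum.cong[OF refl])
    fix y assume y: "y \<in> ?U"
    have "(\<Sum>x\<in>?U. lam x * cnj (lam y) * psi (c * (x - y))) = (\<Sum>s\<in>?U. lam (s * y) * cnj (lam y) * psi (c * (s * y - y)))"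
      by (rule sum.reindex_bij_witness[of _ "\<lambda>x. x * y" "\<lambda>x. x / y"]) (use y in auto)
    also have "\<dots> = (\<Sum>s\<in>?U. lam s * psi ((c * (s - 1)) * y))"
    proof (rule sum.cong[OF refl])
      fix s assume s: "s \<in> ?U"
      have "lam (s * y) * cnj (lam y) = lam s * (lam y * cnj (lam y))" using s y by (simp add: m)
      also have "\<dots> = lam s" using cl y by simp
      finally show "lam (s * y) * cnj (lam y) * psi (c * (s * y - y)) = lam s * psi ((c * (s - 1)) * y)"
        by (simp add: algebra_simps)
    qed
    finally show "(\<Sum>x\<in>?U. lam x * cnj (lam y) * psi (c * (x - y))) = (\<Sum>s\<in>?U. lam s * psi ((c * (s - 1)) * y))" .
  qed
  also have "\<dots> = (\<Sum>s\<in>?U. lam s * (\<Sum>y\<in>?U. psi ((c * (s - 1)) * y)))"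
    by (subst sum.swap) (simp add: sum_distrib_left)
  also have "\<dots> = (\<Sum>s\<in>?U. lam s * (if s = 1 then of_nat CARD('a) - 1 else - 1))"
    using c by (intro sum.cong refl) (simp add: psi_U)
  also have "\<dots> = (\<Sum>s\<in>?U. (if s = 1 then of_nat CARD('a) else 0) - lam s)"
    by (intro sum.cong refl) (auto simp: l1 algebra_simps)
  also have "\<dots> = of_nat CARD('a) - (\<Sum>s\<in>?U. lam s)"
    by (simp add: sum_subtractf sum.If_cases Int_def)
  finally have TT: "T * cnj T = of_nat CARD('a) - (\<Sum>s\<in>?U. lam s)" .
  have "(\<Sum>s\<in>?U. lam s) = 0 \<or> (\<Sum>s\<in>?U. lam s) = of_nat CARD('a) - 1"
  proof (cases "\<exists>s0. s0 \<noteq> 0 \<and> lam s0 \<noteq> 1")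
    case True
    then obtain s0 where "s0 \<noteq> 0" "lam s0 \<noteq> 1" by blast
    thus ?thesis using orth_mult[of lam s0] m by blast
  next
    case False
    hence "(\<Sum>s\<in>?U. lam s) = (\<Sum>s\<in>?U. 1)" by (intro sum.cong) auto
    thus ?thesis using card_U[where 'a='a] card_ge2[where 'a='a] by (simp add: of_nat_diff)
  qed
  hence "T * cnj T = of_nat CARD('a) \<or> T * cnj T = 1" using TT by auto
  moreover have "T * cnj T = of_real (norm T ^ 2)" by (rule complex_norm_square[symmetric])
  ultimately have "complex_of_real (norm T ^ 2) = complex_of_real (real CARD('a)) \<or> complex_of_real (norm T ^ 2) = complex_of_real 1"
    by simp
  hence "norm T ^ 2 = real CARD('a) \<or> norm T ^ 2 = 1" by (simp only: of_real_eq_iff)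
  hence "norm T ^ 2 \<le> real CARD('a)" using card_ge2[where 'a='a] by auto
  hence "norm T \<le> sqrt (real CARD('a))" by (simp add: real_le_rsqrt)
  thus ?thesis by (simp add: T_def)
qed

end

locale gset = addc psi for psi :: "'a::{field,finite} \<Rightarrow> complex" +
  fixes chi :: "nat \<Rightarrow> 'a \<Rightarrow> complex"
  assumes C1: "\<And>k x y. x \<noteq> 0 \<Longrightarrow> y \<noteq> 0 \<Longrightarrow> chi k (x*y) = chi k x * chi k y"
    and C2: "\<And>k x. norm (chi k x) = 1"
    and C3: "\<And>x. chi 0 x = 1"
    and C4: "\<And>d y. d > 0 \<Longrightarrow> y \<noteq> 0 \<Longrightarrow> of_nat (card {x. x \<noteq> 0 \<and> x^d = y}) =
       (\<Sum>k\<in>{k. k < CARD('a) - 1 \<and> (\<forall>x. x\<noteq>0 \<longrightarrow> chi k x ^ d = 1)}. cnj (chi k y))"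
    and C5: "\<And>d. d > 0 \<Longrightarrow> card {k. k < CARD('a) - 1 \<and> (\<forall>x. x\<noteq>0 \<longrightarrow> chi k x ^ d = 1)} \<le> d"
begin

definition KK :: "nat \<Rightarrow> nat set" where
  "KK d = {k. k < CARD('a) - 1 \<and> (\<forall>x. x\<noteq>0 \<longrightarrow> chi k x ^ d = 1)}"

definition Gs :: "nat \<Rightarrow> 'a \<Rightarrow> complex" where
  "Gs k c = (\<Sum>y\<in>UNIV-{0}. cnj (chi k y) * psi (c * y))"

lemma KK_fin: "finite (KK d)" by (simp add: KK_def)

lemma KK0: "0 \<in> KK d"
  using card_ge2[where 'a='a] by (simp add: KK_def C3)

lemma chi1: "chi k 1 = 1"
proof (rule unit_idem)
  show "chi k 1 * chi k 1 = chi k 1" using C1[of 1 1 k] by simp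
  show "chi k 1 \<noteq> 0" using C2[of k 1] by auto
qed

lemma chi_inv: "c \<noteq> 0 \<Longrightarrow> chi k (inverse c) = cnj (chi k c)"
proof (rule inv_unit)
  assume c: "c \<noteq> 0"
  have "chi k (c * inverse c) = chi k c * chi k (inverse c)" using C1[of c "inverse c" k] c by simp
  thus "chi k c * chi k (inverse c) = 1" using c chi1 by simp
  show "norm (chi k c) = 1" by (rule C2)
qed

lemma fiber:
  assumes d: "d > 0"
  shows "(\<Sum>x\<in>UNIV-{0}. psi (c * x ^ d)) = (\<Sum>k\<in>KK d. Gs k c)"
proof -
  let ?U = "UNIV - {0::'a}"
  have "(\<Sum>x\<in>?U. psi (c * x ^ d)) = (\<Sum>y\<in>?U. \<Sum>x\<in>{x. x \<in> ?U \<and> x ^ d = y}. psi (c * x ^ d))"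
    by (rule sum.group[symmetric]) auto
  also have "\<dots> = (\<Sum>y\<in>?U. of_nat (card {x. x \<noteq> 0 \<and> x ^ d = y}) * psi (c * y))"
  proof (rule sum.cong[OF refl])
    fix y assume y: "y \<in> ?U"
    have "(\<Sum>x\<in>{x. x \<in> ?U \<and> x ^ d = y}. psi (c * x ^ d)) = (\<Sum>x\<in>{x. x \<noteq> 0 \<and> x ^ d = y}. psi (c * y))"
      by (intro sum.cong) auto
    thus "(\<Sum>x\<in>{x. x \<in> ?U \<and> x ^ d = y}. psi (c * x ^ d)) = of_nat (card {x. x \<noteq> 0 \<and> x ^ d = y}) * psi (c * y)"
      by simp
  qed
  also have "\<dots> = (\<Sum>y\<in>?U. (\<Sum>k\<in>KK d. cnj (chi k y)) * psi (c * y))"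
    using C4[OF d] by (intro sum.cong) (auto simp: KK_def)
  also have "\<dots> = (\<Sum>y\<in>?U. \<Sum>k\<in>KK d. cnj (chi k y) * psi (c * y))"
    by (simp add: sum_distrib_right)
  also have "\<dots> = (\<Sum>k\<in>KK d. Gs k c)"
    unfolding Gs_def by (rule sum.swap)
  finally show ?thesis .
qed

lemma Gs_scale:
  assumes c: "c \<noteq> 0"
  shows "Gs k c = chi k c * Gs k 1"
proof -
  have "Gs k c = (\<Sum>z\<in>UNIV-{0}. cnj (chi k (z / c)) * psi z)"
    unfolding Gs_def
    by (rule sum.reindex_bij_witness[of _ "\<lambda>y. y / c" "\<lambda>y. c * y"]) (use c in auto)
  also have "\<dots> = (\<Sum>z\<in>UNIV-{0}. chi k c * (cnj (chi k z) * psi (1 * z)))"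
  proof (rule sum.cong[OF refl])
    fix z assume z: "z \<in> UNIV - {0::'a}"
    have "chi k (z / c) = chi k z * cnj (chi k c)"
      using z c by (simp add: divide_inverse C1 chi_inv)
    thus "cnj (chi k (z / c)) * psi z = chi k c * (cnj (chi k z) * psi (1 * z))" by simp
  qed
  also have "\<dots> = chi k c * Gs k 1" unfolding Gs_def by (simp add: sum_distrib_left)
  finally show ?thesis .
qed

lemma Gs0: "c \<noteq> 0 \<Longrightarrow> Gs 0 c = -1"
  unfolding Gs_def by (simp add: C3 psi_U)

lemma Gs_norm: "norm (Gs k 1) \<le> sqrt (CARD('a))"
proof -
  have "Gs k 1 = (\<Sum>t\<in>UNIV-{0}. cnj (chi k t) * psi (1 * t))" unfolding Gs_def by simp
  also have "norm \<dots> \<le> sqrt (CARD('a))"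
    by (rule gauss) (simp_all add: C1 C2)
  finally show ?thesis .
qed

lemma count:
  "of_nat (Nstar n d a b) * of_nat CARD('a) =
   (\<Sum>t\<in>UNIV. psi (-(t*b)) * (\<Prod>i\<in>{1..n}. \<Sum>x\<in>UNIV-{0}. psi (t * a i * x ^ d i)))"
proof -
  let ?P = "{1..n} \<rightarrow>\<^sub>E (UNIV - {0::'a})"
  let ?F = "\<lambda>x. \<Sum>i=1..n. a i * x i ^ d i"
  have fP: "finite ?P" by (intro finite_PiE) auto
  have "{x \<in> ?P. ?F x = b} = ?P \<inter> {x. ?F x = b}" by auto
  hence "of_nat (Nstar n d a b) = (\<Sum>x\<in>?P. of_bool (?F x = b) :: complex)"
    unfolding Nstar_def using fP by simp
  hence "of_nat (Nstar n d a b) * of_nat CARD('a) = (\<Sum>x\<in>?P. of_bool (?F x = b) * of_nat CARD('a) :: complex)"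
    by (simp add: sum_distrib_right)
  also have "\<dots> = (\<Sum>x\<in>?P. \<Sum>t\<in>UNIV. psi (-(t*b)) * (\<Prod>i\<in>{1..n}. psi (t * a i * x i ^ d i)))"
  proof (rule sum.cong[OF refl])
    fix x assume x: "x \<in> ?P"
    have "of_bool (?F x = b) * of_nat CARD('a) = (\<Sum>t\<in>UNIV. psi ((?F x - b) * t))"
      by (simp add: psi_orth)
    also have "\<dots> = (\<Sum>t\<in>UNIV. psi (-(t*b)) * (\<Prod>i\<in>{1..n}. psi (t * a i * x i ^ d i)))"
    proof (rule sum.cong[OF refl])
      fix t
      have e1: "(\<Sum>i\<in>{1..n}. t * a i * x i ^ d i) = t * ?F x" by (simp add: sum_distrib_left mult.assoc)
      have "(?F x - b) * t = -(t*b) + (\<Sum>i\<in>{1..n}. t * a i * x i ^ d i)" by (simp only: e1) (simp add: algebra_simps)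
      hence "psi ((?F x - b) * t) = psi (-(t*b)) * psi (\<Sum>i\<in>{1..n}. t * a i * x i ^ d i)" by (simp only: padd)
      also have "psi (\<Sum>i\<in>{1..n}. t * a i * x i ^ d i) = (\<Prod>i\<in>{1..n}. psi (t * a i * x i ^ d i))"
        by (rule psi_sum) simp
      finally show "psi ((?F x - b) * t) = psi (-(t*b)) * (\<Prod>i\<in>{1..n}. psi (t * a i * x i ^ d i))" .
    qed
    finally show "of_bool (?F x = b) * of_nat CARD('a) = (\<Sum>t\<in>UNIV. psi (-(t*b)) * (\<Prod>i\<in>{1..n}. psi (t * a i * x i ^ d i)))" .
  qed
  also have "\<dots> = (\<Sum>t\<in>UNIV. \<Sum>x\<in>?P. psi (-(t*b)) * (\<Prod>i\<in>{1..n}. psi (t * a i * x i ^ d i)))"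
    by (rule sum.swap)
  also have "\<dots> = (\<Sum>t\<in>UNIV. psi (-(t*b)) * (\<Prod>i\<in>{1..n}. \<Sum>y\<in>UNIV-{0}. psi (t * a i * y ^ d i)))"
  proof (rule sum.cong[OF refl])
    fix t
    have "(\<Prod>i\<in>{1..n}. \<Sum>y\<in>UNIV-{0}. psi (t * a i * y ^ d i)) = (\<Sum>x\<in>?P. \<Prod>i\<in>{1..n}. psi (t * a i * x i ^ d i))"
      by (rule prod_sum_PiE) auto
    thus "(\<Sum>x\<in>?P. psi (-(t*b)) * (\<Prod>i\<in>{1..n}. psi (t * a i * x i ^ d i))) = psi (-(t*b)) * (\<Prod>i\<in>{1..n}. \<Sum>y\<in>UNIV-{0}. psi (t * a i * y ^ d i))"
      by (simp add: sum_distrib_left)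
  qed
  finally show ?thesis .
qed

definition BB :: "(nat \<Rightarrow> nat) \<Rightarrow> (nat \<Rightarrow> 'a) \<Rightarrow> nat \<Rightarrow> 'a \<Rightarrow> complex" where
  "BB d a i t = (\<Sum>k\<in>KK (d i) - {0}. Gs k (t * a i))"

definition EE :: "(nat \<Rightarrow> nat) \<Rightarrow> (nat \<Rightarrow> 'a) \<Rightarrow> 'a \<Rightarrow> nat set \<Rightarrow> complex" where
  "EE d a b S = (\<Sum>t\<in>UNIV-{0}. psi (-(t*b)) * (\<Prod>i\<in>S. BB d a i t))"

lemma ident:
  assumes d: "\<And>i. i \<in> {1..n} \<Longrightarrow> d i > 0" and b: "b \<noteq> 0" and a: "\<And>i. i \<in> {1..n} \<Longrightarrow> a i \<noteq> 0"
  shows "of_nat (Nstar n d a b) * of_nat CARD('a) =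
    (of_nat CARD('a) - 1) ^ n - (-1) ^ n + (\<Sum>S\<in>Pow {1..n} - {{}}. (-1) ^ card ({1..n} - S) * EE d a b S)"
proof -
  let ?U = "UNIV - {0::'a}"
  let ?I = "{1..n}"
  let ?f = "\<lambda>t. psi (-(t*b)) * (\<Prod>i\<in>?I. \<Sum>x\<in>?U. psi (t * a i * x ^ d i))"
  have "of_nat (Nstar n d a b) * of_nat CARD('a) = (\<Sum>t\<in>UNIV. ?f t)" by (rule count)
  also have "\<dots> = ?f 0 + (\<Sum>t\<in>?U. ?f t)" by (subst sum.remove[of UNIV 0]) simp_all
  also have "?f 0 = (of_nat CARD('a) - 1) ^ n"
    using psi_U[of 0] by (simp add: psi0)
  also have "(\<Sum>t\<in>?U. ?f t) = (\<Sum>t\<in>?U. psi (-(t*b)) * (\<Prod>i\<in>?I. BB d a i t + (-1)))"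
  proof (rule sum.cong[OF refl])
    fix t assume t: "t \<in> ?U"
    have "(\<Sum>x\<in>?U. psi (t * a i * x ^ d i)) = BB d a i t + (-1)" if i: "i \<in> ?I" for i
    proof -
      have "(\<Sum>x\<in>?U. psi (t * a i * x ^ d i)) = (\<Sum>k\<in>KK (d i). Gs k (t * a i))"
        by (rule fiber[OF d[OF i]])
      also have "\<dots> = Gs 0 (t * a i) + BB d a i t"
        unfolding BB_def by (subst sum.remove[OF KK_fin KK0]) simp
      also have "Gs 0 (t * a i) = -1" using t a[OF i] by (intro Gs0) simp
      finally show ?thesis by simp
    qed
    thus "?f t = psi (-(t*b)) * (\<Prod>i\<in>?I. BB d a i t + (-1))" by simp
  qed
  also have "\<dots> = (\<Sum>t\<in>?U. \<Sum>S\<in>Pow ?I. (-1) ^ card (?I - S) * (psi (-(t*b)) * (\<Prod>i\<in>S. BB d a i t)))"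
  proof (rule sum.cong[OF refl])
    fix t
    have "(\<Prod>i\<in>?I. BB d a i t + (-1)) = (\<Sum>S\<in>Pow ?I. (\<Prod>i\<in>S. BB d a i t) * (\<Prod>i\<in>?I - S. (-1::complex)))"
      by (rule prod_add) simp
    thus "psi (-(t*b)) * (\<Prod>i\<in>?I. BB d a i t + (-1)) = (\<Sum>S\<in>Pow ?I. (-1) ^ card (?I - S) * (psi (-(t*b)) * (\<Prod>i\<in>S. BB d a i t)))"
      by (simp add: sum_distrib_left mult_ac)
  qed
  also have "\<dots> = (\<Sum>S\<in>Pow ?I. (-1) ^ card (?I - S) * EE d a b S)"
    unfolding EE_def by (subst sum.swap) (simp add: sum_distrib_left)
  also have "\<dots> = (-1) ^ card (?I - {}) * EE d a b {} + (\<Sum>S\<in>Pow ?I - {{}}. (-1) ^ card (?I - S) * EE d a b S)"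
    by (subst sum.remove[of _ "{}"]) simp_all
  also have "EE d a b {} = -1"
  proof -
    have "EE d a b {} = (\<Sum>t\<in>?U. psi ((-b) * t))" unfolding EE_def by (simp add: mult.commute)
    also have "\<dots> = -1" using b psi_U[of "-b"] by simp
    finally show ?thesis .
  qed
  finally show ?thesis by simp
qed

lemma errbound:
  assumes S: "finite S" and a: "\<And>i. i \<in> S \<Longrightarrow> a i \<noteq> 0" and b: "b \<noteq> 0"
  shows "norm (EE d a b S) \<le> (\<Prod>i\<in>S. real (card (KK (d i) - {0}))) * sqrt (CARD('a)) ^ (card S + 1)"
proof -
  let ?U = "UNIV - {0::'a}"
  let ?K = "\<lambda>i. KK (d i) - {0}"
  let ?P = "PiE S ?K"
  let ?q = "sqrt (CARD('a))"
  have fP: "finite ?P" using S by (intro finite_PiE) (auto simp: KK_fin)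
  define C where "C \<kappa> = (\<Prod>i\<in>S. chi (\<kappa> i) (a i) * Gs (\<kappa> i) 1)" for \<kappa>
  define L where "L \<kappa> t = (\<Prod>i\<in>S. chi (\<kappa> i) t)" for \<kappa> t
  have "EE d a b S = (\<Sum>t\<in>?U. \<Sum>\<kappa>\<in>?P. psi (-(t*b)) * (\<Prod>i\<in>S. Gs (\<kappa> i) (t * a i)))"
    unfolding EE_def BB_def
    by (intro sum.cong refl) (simp add: prod_sum_PiE[OF S] KK_fin sum_distrib_left)
  also have "\<dots> = (\<Sum>\<kappa>\<in>?P. \<Sum>t\<in>?U. psi (-(t*b)) * (\<Prod>i\<in>S. Gs (\<kappa> i) (t * a i)))"
    by (rule sum.swap)
  also have "\<dots> = (\<Sum>\<kappa>\<in>?P. C \<kappa> * (\<Sum>t\<in>?U. L \<kappa> t * psi ((-b) * t)))"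
  proof (rule sum.cong[OF refl])
    fix \<kappa>
    show "(\<Sum>t\<in>?U. psi (-(t*b)) * (\<Prod>i\<in>S. Gs (\<kappa> i) (t * a i))) = C \<kappa> * (\<Sum>t\<in>?U. L \<kappa> t * psi ((-b) * t))"
      unfolding sum_distrib_left
    proof (rule sum.cong[OF refl])
      fix t assume t: "t \<in> ?U"
      have "(\<Prod>i\<in>S. Gs (\<kappa> i) (t * a i)) = (\<Prod>i\<in>S. chi (\<kappa> i) t * (chi (\<kappa> i) (a i) * Gs (\<kappa> i) 1))"
      proof (rule prod.cong[OF refl])
        fix i assume i: "i \<in> S"
        have "Gs (\<kappa> i) (t * a i) = chi (\<kappa> i) (t * a i) * Gs (\<kappa> i) 1" using t a[OF i] by (intro Gs_scale) simp
        also have "chi (\<kappa> i) (t * a i) = chi (\<kappa> i) t * chi (\<kappa> i) (a i)" using t a[OF i] by (intro C1) simp_all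
        finally show "Gs (\<kappa> i) (t * a i) = chi (\<kappa> i) t * (chi (\<kappa> i) (a i) * Gs (\<kappa> i) 1)" by simp
      qed
      also have "\<dots> = L \<kappa> t * C \<kappa>" unfolding L_def C_def by (rule prod.distrib)
      finally show "psi (-(t*b)) * (\<Prod>i\<in>S. Gs (\<kappa> i) (t * a i)) = C \<kappa> * (L \<kappa> t * psi ((-b) * t))"
        by (simp add: mult.commute)
    qed
  qed
  finally have EE: "EE d a b S = (\<Sum>\<kappa>\<in>?P. C \<kappa> * (\<Sum>t\<in>?U. L \<kappa> t * psi ((-b) * t)))" .
  have bnd: "norm (C \<kappa> * (\<Sum>t\<in>?U. L \<kappa> t * psi ((-b) * t))) \<le> ?q ^ (card S + 1)" for \<kappa>
  proof -
    have "norm (C \<kappa>) = (\<Prod>i\<in>S. norm (chi (\<kappa> i) (a i) * Gs (\<kappa> i) 1))"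
      unfolding C_def by (rule prod_norm[symmetric])
    also have "\<dots> \<le> (\<Prod>i\<in>S. ?q)"
      by (rule prod_mono) (simp add: norm_mult C2 Gs_norm)
    also have "\<dots> = ?q ^ card S" by simp
    finally have c1: "norm (C \<kappa>) \<le> ?q ^ card S" .
    have c2: "norm (\<Sum>t\<in>?U. L \<kappa> t * psi ((-b) * t)) \<le> ?q"
    proof (rule gauss)
      show "L \<kappa> (x * y) = L \<kappa> x * L \<kappa> y" if "x \<noteq> 0" "y \<noteq> 0" for x y
        unfolding L_def using that by (simp add: C1 prod.distrib)
      show "norm (L \<kappa> x) = 1" for x
        unfolding L_def by (simp add: prod_norm[symmetric] C2)
      show "- b \<noteq> 0" using b by simp
    qed
    have "norm (C \<kappa> * (\<Sum>t\<in>?U. L \<kappa> t * psi ((-b) * t))) = norm (C \<kappa>) * norm (\<Sum>t\<in>?U. L \<kappa> t * psi ((-b) * t))"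
      by (rule norm_mult)
    also have "\<dots> \<le> ?q ^ card S * ?q"
      by (rule mult_mono[OF c1 c2]) simp_all
    finally show ?thesis by (simp add: mult.commute)
  qed
  have "norm (EE d a b S) \<le> (\<Sum>\<kappa>\<in>?P. ?q ^ (card S + 1))"
    unfolding EE by (rule sum_norm_le) (rule bnd)
  also have "\<dots> = real (card ?P) * ?q ^ (card S + 1)" by simp
  also have "card ?P = (\<Prod>i\<in>S. card (KK (d i) - {0}))" by (rule card_PiE[OF S])
  finally show ?thesis by simp
qed

end

lemma reindex_sum:
  fixes f :: "nat set \<Rightarrow> nat \<Rightarrow> real"
  shows "(\<Sum>e<n. \<Sum>S\<in>{S. S \<subseteq> {1..n} \<and> card S = n - e}. f S (n - e - 1)) = (\<Sum>S\<in>Pow {1..n} - {{}}. f S (card S - 1))"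
proof -
  let ?I = "{1..n::nat}"
  have img: "(\<lambda>S. n - card S) ` (Pow ?I - {{}}) \<subseteq> {..<n}"
  proof
    fix e assume "e \<in> (\<lambda>S. n - card S) ` (Pow ?I - {{}})"
    then obtain S where S: "S \<subseteq> ?I" "S \<noteq> {}" "e = n - card S" by auto
    have fS: "finite S" using S(1) finite_subset by blast
    have "card S > 0" using S(2) fS by (simp add: card_gt_0_iff)
    moreover have "card S \<le> n" using card_mono[OF _ S(1)] by simp
    ultimately show "e \<in> {..<n}" using S(3) by simp
  qed
  have "(\<Sum>S\<in>Pow ?I - {{}}. f S (card S - 1)) = (\<Sum>e<n. \<Sum>S\<in>{S. S \<in> Pow ?I - {{}} \<and> n - card S = e}. f S (card S - 1))"
    by (rule sum.group[symmetric], simp, simp, rule img)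
  also have "\<dots> = (\<Sum>e<n. \<Sum>S\<in>{S. S \<subseteq> {1..n} \<and> card S = n - e}. f S (n - e - 1))"
  proof (rule sum.cong[OF refl])
    fix e assume e: "e \<in> {..<n}"
    have eq: "{S. S \<in> Pow ?I - {{}} \<and> n - card S = e} = {S. S \<subseteq> {1..n} \<and> card S = n - e}"
    proof -
      have "S \<in> Pow ?I - {{}} \<and> n - card S = e \<longleftrightarrow> S \<subseteq> {1..n} \<and> card S = n - e" for S
      proof
        assume S: "S \<in> Pow ?I - {{}} \<and> n - card S = e"
        have "card S \<le> n" using card_mono[of ?I S] S by simp
        thus "S \<subseteq> {1..n} \<and> card S = n - e" using S e by auto
      next
        assume S: "S \<subseteq> {1..n} \<and> card S = n - e"
        have "S \<noteq> {}" using S e by auto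
        thus "S \<in> Pow ?I - {{}} \<and> n - card S = e" using S e by auto
      qed
      thus ?thesis by blast
    qed
    show "(\<Sum>S\<in>{S. S \<in> Pow ?I - {{}} \<and> n - card S = e}. f S (card S - 1)) = (\<Sum>S\<in>{S. S \<subseteq> {1..n} \<and> card S = n - e}. f S (n - e - 1))"
      unfolding eq by (intro sum.cong refl) auto
  qed
  finally show ?thesis by simp
qed

theorem mainTheorem7:
  fixes n :: nat and d :: "nat \<Rightarrow> nat" and a :: "nat \<Rightarrow> 'a::{field,finite}" and b :: 'a
  assumes "\<And>i. i \<in> {1..n} \<Longrightarrow> d i > 0"
      and "b \<noteq> 0"
      and "\<And>i. i \<in> {1..n} \<Longrightarrow> a i \<noteq> 0"
  shows "\<bar>real (Nstar n d a b) - (1 / real (CARD('a))) * ((real (CARD('a)) - 1) ^ n - (-1) ^ n)\<bar>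
         \<le> (\<Sum>e<n. \<Sum>S\<in>{S. S \<subseteq> {1..n} \<and> card S = n - e}.
               (\<Prod>i\<in>S. real (d i) - 1) * sqrt (real (CARD('a))) ^ (n - e - 1))"
proof -
  from add_char_exists[where 'a='a] obtain psi :: "'a \<Rightarrow> complex" where
    psi: "(\<forall>x y. psi (x + y) = psi x * psi y) \<and> (\<forall>x. norm (psi x) = 1) \<and> (\<exists>x. psi x \<noteq> 1)" ..
  from mult_chars_exist[where 'a='a] obtain chi :: "nat \<Rightarrow> 'a \<Rightarrow> complex" where chi:
   "(\<forall>k x y. x \<noteq> 0 \<longrightarrow> y \<noteq> 0 \<longrightarrow> chi k (x*y) = chi k x * chi k y) \<and>
   (\<forall>k x. norm (chi k x) = 1) \<and>
   (\<forall>x. chi 0 x = 1) \<and>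
   (\<forall>d y. d > 0 \<longrightarrow> y \<noteq> 0 \<longrightarrow> of_nat (card {x. x \<noteq> 0 \<and> x^d = y}) =
       (\<Sum>k\<in>{k. k < CARD('a) - 1 \<and> (\<forall>x. x\<noteq>0 \<longrightarrow> chi k x ^ d = 1)}. cnj (chi k y))) \<and>
   (\<forall>d. d > 0 \<longrightarrow> card {k. k < CARD('a) - 1 \<and> (\<forall>x. x\<noteq>0 \<longrightarrow> chi k x ^ d = 1)} \<le> d)" ..
  interpret gset psi chi
  proof (unfold_locales)
    show "psi (x + y) = psi x * psi y" for x y using psi by blast
    show "norm (psi x) = 1" for x using psi by blast
    show "\<exists>x. psi x \<noteq> 1" using psi by blast
    show "chi k (x*y) = chi k x * chi k y" if "x \<noteq> 0" "y \<noteq> 0" for k x y using chi that by blast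
    show "norm (chi k x) = 1" for k x using chi by blast
    show "chi 0 x = 1" for x using chi by blast
    show "of_nat (card {x. x \<noteq> 0 \<and> x^d = y}) =
       (\<Sum>k\<in>{k. k < CARD('a) - 1 \<and> (\<forall>x. x\<noteq>0 \<longrightarrow> chi k x ^ d = 1)}. cnj (chi k y))"
      if "d > 0" "y \<noteq> 0" for d y using chi that by blast
    show "card {k. k < CARD('a) - 1 \<and> (\<forall>x. x\<noteq>0 \<longrightarrow> chi k x ^ d = 1)} \<le> d"
      if "d > 0" for d using chi that by blast
  qed
  let ?I = "{1..n}"
  let ?Q = "CARD('a)"
  let ?q = "real CARD('a)"
  let ?s = "sqrt ?q"
  define R where "R = (\<Sum>S\<in>Pow ?I - {{}}. (-1) ^ card (?I - S) * EE d a b S)"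
  have id: "of_nat (Nstar n d a b) * of_nat ?Q = (of_nat ?Q - 1) ^ n - (-1) ^ n + R"
    unfolding R_def by (rule ident) (use assms in auto)
  have q0: "?q > 0" using card_ge2[where 'a='a] by simp
  have "complex_of_real (real (Nstar n d a b) - (1 / ?q) * ((?q - 1) ^ n - (-1) ^ n)) = R / of_nat ?Q"
  proof -
    have "complex_of_real (real (Nstar n d a b) - (1 / ?q) * ((?q - 1) ^ n - (-1) ^ n))
        = of_nat (Nstar n d a b) - (1 / of_nat ?Q) * ((of_nat ?Q - 1) ^ n - (-1) ^ n)" by simp
    also have "\<dots> = R / of_nat ?Q" using id q0 by (simp add: field_simps)
    finally show ?thesis .
  qed
  hence "norm (complex_of_real (real (Nstar n d a b) - (1 / ?q) * ((?q - 1) ^ n - (-1) ^ n))) = norm (R / of_nat ?Q)"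
    by (rule arg_cong)
  hence lhs: "\<bar>real (Nstar n d a b) - (1 / ?q) * ((?q - 1) ^ n - (-1) ^ n)\<bar> = norm R / ?q"
    by (simp only: norm_of_real norm_divide norm_of_nat)
  have "norm R \<le> (\<Sum>S\<in>Pow ?I - {{}}. norm ((-1) ^ card (?I - S) * EE d a b S))"
    unfolding R_def by (rule norm_sum)
  also have "\<dots> \<le> (\<Sum>S\<in>Pow ?I - {{}}. (\<Prod>i\<in>S. real (d i) - 1) * ?s ^ (card S + 1))"
  proof (rule sum_mono)
    fix S assume S: "S \<in> Pow ?I - {{}}"
    have fS: "finite S" using S finite_subset by auto
    have "norm ((-1) ^ card (?I - S) * EE d a b S) = norm (EE d a b S)" by (simp add: norm_mult norm_power)
    also have "\<dots> \<le> (\<Prod>i\<in>S. real (card (KK (d i) - {0}))) * ?s ^ (card S + 1)"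
      by (rule errbound[OF fS]) (use S assms in auto)
    also have "\<dots> \<le> (\<Prod>i\<in>S. real (d i) - 1) * ?s ^ (card S + 1)"
    proof (rule mult_right_mono)
      show "(\<Prod>i\<in>S. real (card (KK (d i) - {0}))) \<le> (\<Prod>i\<in>S. real (d i) - 1)"
      proof (rule prod_mono)
        fix i assume i: "i \<in> S"
        have "i \<in> {1..n}" using i S by blast
        hence di: "d i > 0" by (rule assms(1))
        have "card (KK (d i) - {0}) = card (KK (d i)) - 1" by (simp add: KK0 KK_fin)
        moreover have "card (KK (d i)) \<le> d i" using C5[OF di] by (simp add: KK_def)
        moreover have "card (KK (d i)) \<ge> 1" using KK0 KK_fin by (metis One_nat_def Suc_leI card_gt_0_iff empty_iff)
        ultimately show "0 \<le> real (card (KK (d i) - {0})) \<and> real (card (KK (d i) - {0})) \<le> real (d i) - 1"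
          by (simp add: of_nat_diff)
      qed
    qed simp
    finally show "norm ((-1) ^ card (?I - S) * EE d a b S) \<le> (\<Prod>i\<in>S. real (d i) - 1) * ?s ^ (card S + 1)" .
  qed
  finally have nR: "norm R \<le> (\<Sum>S\<in>Pow ?I - {{}}. (\<Prod>i\<in>S. real (d i) - 1) * ?s ^ (card S + 1))" .
  have "norm R / ?q \<le> (\<Sum>S\<in>Pow ?I - {{}}. (\<Prod>i\<in>S. real (d i) - 1) * ?s ^ (card S + 1)) / ?q"
    using nR q0 by (simp add: divide_right_mono)
  also have "\<dots> = (\<Sum>S\<in>Pow ?I - {{}}. (\<Prod>i\<in>S. real (d i) - 1) * ?s ^ (card S - 1))"
    unfolding sum_divide_distrib
  proof (rule sum.cong[OF refl])
    fix S assume S: "S \<in> Pow ?I - {{}}"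
    have "card S > 0" using S finite_subset[of S ?I] by (auto simp: card_gt_0_iff)
    hence "card S + 1 = (card S - 1) + 2" by simp
    hence "?s ^ (card S + 1) = ?s ^ ((card S - 1) + 2)" by (simp only:)
    also have "\<dots> = ?s ^ (card S - 1) * ?s ^ 2" by (rule power_add)
    also have "?s ^ 2 = ?q" by simp
    finally have "?s ^ (card S + 1) = ?s ^ (card S - 1) * ?q" .
    thus "(\<Prod>i\<in>S. real (d i) - 1) * ?s ^ (card S + 1) / ?q = (\<Prod>i\<in>S. real (d i) - 1) * ?s ^ (card S - 1)"
      using q0 by simp
  qed
  also have "\<dots> = (\<Sum>e<n. \<Sum>S\<in>{S. S \<subseteq> {1..n} \<and> card S = n - e}. (\<Prod>i\<in>S. real (d i) - 1) * ?s ^ (n - e - 1))"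
    by (rule reindex_sum[where f = "\<lambda>S m. (\<Prod>i\<in>S. real (d i) - 1) * ?s ^ m", symmetric])
  finally show ?thesis using lhs by simp
qed

end
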